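(* For every $\epsilon>0$, $\rho^h\in\mathcal{P}(\mathcal{T}^h)$ with positive entries, and $(K,L)\in\Sigma^h$, the Scharfetter--Gummel flux \[ \mathcal{J}^{h,\rho}_{K|L}=\epsilon\tau_{K|L}\big(\mathfrak b(q_{K|L}/\epsilon)u_K-\mathfrak b(-q_{K|L}/\epsilon)u_L\big),\qquad \mathfrak b(s)=\frac{s}{e^s-1},\ u_K=\frac{\rho^h_K}{|K|}, \] satisfies $\mathcal{J}^{h,\rho}_{K|L}=D_2\overline{\mathcal{R}}^*_{\epsilon,h}\big(\rho^h,-\overline\nabla\mathcal{E}'_{\epsilon,h}(\rho^h)\big)(K,L)$, where $\overline{\mathcal{R}}^*_{\epsilon,h}$ is the `cosh' dual dissipation potential with edge conductivity $\vartheta^{\epsilon,h,\rho}$ defined below. In particular, the Scharfetter--Gummel scheme $\partial_t\rho^h_K+\sum_{L\in\mathcal{T}^h_K}\mathcal{J}^{h,\rho}_{K|L}=0$ possesses the `cosh' gradient flow structure with driving energy $\mathcal{E}_{\epsilon,h}$.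
   Context: $(\mathcal{T}^h,\Sigma^h)$ is a tessellation of a bounded domain: finite family of disjoint cells $K$ with volumes $|K|$, $\Sigma^h$ the set of ordered pairs of cells sharing a face $(K|L)$; $x_K$ barycenter, $\tau_{K|L}=|(K|L)|/|x_L-x_K|$, $\mathcal{T}^h_K=\{L:(K,L)\in\Sigma^h\}$. Given $V_K\in\mathbb{R}$ and symmetric $W_{KL}\in\mathbb{R}$, set $\mathsf{Q}^{h,\rho}_K=V_K+\sum_MW_{KM}\rho^h_M$ and $q_{K|L}=\mathsf{Q}^{h,\rho}_L-\mathsf{Q}^{h,\rho}_K$. Energy $\mathcal{E}_{\epsilon,h}(\rho)=\epsilon\sum_K\phi(u_K)|K|+\sum_KV_K\rho_K+\frac12\sum_{K,L}W_{KL}\rho_K\rho_L$ with $\phi(s)=s\log s-s+1$; its variational derivative is taken as $\mathcal{E}'_{\epsilon,h}(\rho)_K=\epsilon(\log\rho_K-\log\pi^{\epsilon,h,\rho}_K)$, with $\pi^{\epsilon,h,\rho}_K=|K|e^{-\mathsf{Q}^{h,\rho}_K/\epsilon}/Z^{\epsilon,h,\rho}$, $Z^{\epsilon,h,\rho}=\sum_K|K|e^{-\mathsf{Q}^{h,\rho}_K/\epsilon}$; $\overline\nabla f(K,L)=f(L)-f(K)$. Edge conductivity $\vartheta^{\epsilon,h,\rho}_{K|L}=\frac{\tau_{K|L}}{Z^{\epsilon,h,\rho}}\frac{2q_{K|L}/\epsilon}{\exp(\mathsf{Q}^{h,\rho}_L/\epsilon)-\exp(\mathsf{Q}^{h,\rho}_K/\epsilon)}$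 (extended continuously when $q_{K|L}=0$). `Cosh' dual dissipation potential: $\overline{\mathcal{R}}^*_{\epsilon,h}(\rho,\xi)=\frac12\sum_{(K,L)\in\Sigma^h}\Psi^*_\epsilon(\xi_{K|L})\sqrt{\bar u_K\bar u_L}\,\vartheta^{\epsilon,h,\rho}_{K|L}$ with $\bar u_K=\rho_K/\pi^{\epsilon,h,\rho}_K$ and $\Psi^*_\epsilon(s)=4\epsilon^2(\cosh(s/2\epsilon)-1)$; $D_2$ denotes the partial derivative in $\xi_{K|L}$ with $\vartheta^{\epsilon,h,\rho}$ held fixed. *)

theory Defs
  imports Complex_Main
begin

text \<open>Tessellation data: a finite set T of cells, volumes vol K, the set Sig of
  ordered neighbour pairs, transmissivities tau K L, potentials V, interaction W.\<close>

definition Qpot :: "'c set \<Rightarrow> ('c \<Rightarrow> real) \<Rightarrow> ('c \<Rightarrow> 'c \<Rightarrow> real) \<Rightarrow> ('c \<Rightarrow> real) \<Rightarrow> 'c \<Rightarrow> real" where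
  "Qpot T V W \<rho> K = V K + (\<Sum>M\<in>T. W K M * \<rho> M)"

definition qdiff :: "'c set \<Rightarrow> ('c \<Rightarrow> real) \<Rightarrow> ('c \<Rightarrow> 'c \<Rightarrow> real) \<Rightarrow> ('c \<Rightarrow> real) \<Rightarrow> 'c \<Rightarrow> 'c \<Rightarrow> real" where
  "qdiff T V W \<rho> K L = Qpot T V W \<rho> L - Qpot T V W \<rho> K"

definition Zpart :: "real \<Rightarrow> 'c set \<Rightarrow> ('c \<Rightarrow> real) \<Rightarrow> ('c \<Rightarrow> real) \<Rightarrow> ('c \<Rightarrow> 'c \<Rightarrow> real) \<Rightarrow> ('c \<Rightarrow> real) \<Rightarrow> real" where
  "Zpart \<epsilon> T vol V W \<rho> = (\<Sum>K\<in>T. vol K * exp (- Qpot T V W \<rho> K / \<epsilon>))"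

definition piEq :: "real \<Rightarrow> 'c set \<Rightarrow> ('c \<Rightarrow> real) \<Rightarrow> ('c \<Rightarrow> real) \<Rightarrow> ('c \<Rightarrow> 'c \<Rightarrow> real) \<Rightarrow> ('c \<Rightarrow> real) \<Rightarrow> 'c \<Rightarrow> real" where
  "piEq \<epsilon> T vol V W \<rho> K = vol K * exp (- Qpot T V W \<rho> K / \<epsilon>) / Zpart \<epsilon> T vol V W \<rho>"

definition Eprime :: "real \<Rightarrow> 'c set \<Rightarrow> ('c \<Rightarrow> real) \<Rightarrow> ('c \<Rightarrow> real) \<Rightarrow> ('c \<Rightarrow> 'c \<Rightarrow> real) \<Rightarrow> ('c \<Rightarrow> real) \<Rightarrow> 'c \<Rightarrow> real" where
  "Eprime \<epsilon> T vol V W \<rho> K = \<epsilon> * (ln (\<rho> K) - ln (piEq \<epsilon> T vol V W \<rho> K))"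

definition dgrad :: "('c \<Rightarrow> real) \<Rightarrow> 'c \<times> 'c \<Rightarrow> real" where
  "dgrad f e = f (snd e) - f (fst e)"

text \<open>Edge conductivity, extended continuously at q = 0.\<close>
definition theta :: "real \<Rightarrow> 'c set \<Rightarrow> ('c \<Rightarrow> real) \<Rightarrow> ('c \<Rightarrow> 'c \<Rightarrow> real) \<Rightarrow> ('c \<Rightarrow> real) \<Rightarrow> ('c \<Rightarrow> 'c \<Rightarrow> real) \<Rightarrow> ('c \<Rightarrow> real) \<Rightarrow> 'c \<Rightarrow> 'c \<Rightarrow> real" where
  "theta \<epsilon> T vol tau V W \<rho> K L =
     (let QK = Qpot T V W \<rho> K; QL = Qpot T V W \<rho> L; q = QL - QK; Z = Zpart \<epsilon> T vol V W \<rho> in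
      if q = 0 then tau K L / Z * 2 * exp (- QK / \<epsilon>)
      else tau K L / Z * ((2 * q / \<epsilon>) / (exp (QL / \<epsilon>) - exp (QK / \<epsilon>))))"

definition PsiStar :: "real \<Rightarrow> real \<Rightarrow> real" where
  "PsiStar \<epsilon> s = 4 * \<epsilon>\<^sup>2 * (cosh (s / (2 * \<epsilon>)) - 1)"

text \<open>Cosh dual dissipation potential, with conductivity held as a separate
  argument (so that the partial derivative D_2 keeps it fixed).\<close>
definition Rstar :: "real \<Rightarrow> ('c \<times> 'c) set \<Rightarrow> ('c \<Rightarrow> real) \<Rightarrow> ('c \<Rightarrow> 'c \<Rightarrow> real) \<Rightarrow> ('c \<Rightarrow> real) \<Rightarrow> ('c \<times> 'c \<Rightarrow> real) \<Rightarrow> real" where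
  "Rstar \<epsilon> Sig ubar th \<rho> \<xi> =
     1/2 * (\<Sum>(K,L)\<in>Sig. PsiStar \<epsilon> (\<xi> (K,L)) * sqrt (ubar K * ubar L) * th K L)"

definition bern :: "real \<Rightarrow> real" where
  "bern s = (if s = 0 then 1 else s / (exp s - 1))"

definition SGflux :: "real \<Rightarrow> 'c set \<Rightarrow> ('c \<Rightarrow> real) \<Rightarrow> ('c \<Rightarrow> 'c \<Rightarrow> real) \<Rightarrow> ('c \<Rightarrow> real) \<Rightarrow> ('c \<Rightarrow> 'c \<Rightarrow> real) \<Rightarrow> ('c \<Rightarrow> real) \<Rightarrow> 'c \<Rightarrow> 'c \<Rightarrow> real" where
  "SGflux \<epsilon> T vol tau V W \<rho> K L =
     (let q = qdiff T V W \<rho> K L in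
      \<epsilon> * tau K L * (bern (q / \<epsilon>) * (\<rho> K / vol K) - bern (- q / \<epsilon>) * (\<rho> L / vol L)))"

end

theory Submission
  imports Defs
begin

lemma sqrt_sinh_ln:
  fixes x y :: real assumes "x > 0" "y > 0"
  shows "sqrt (x * y) * sinh ((ln x - ln y) / 2) = (x - y) / 2"
proof -
  have e1: "exp ((ln x - ln y) / 2) = sqrt x / sqrt y"
    using assms by (simp add: exp_diff diff_divide_distrib ln_sqrt[symmetric])
  have e2: "exp (- ((ln x - ln y) / 2)) = sqrt y / sqrt x"
    using assms by (simp add: exp_diff diff_divide_distrib ln_sqrt[symmetric])
  have "sinh ((ln x - ln y) / 2) = (sqrt x / sqrt y - sqrt y / sqrt x) / 2"
    by (simp add: sinh_def e1 e2 field_simps)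
  moreover have "sqrt x * sqrt x = x" "sqrt y * sqrt y = y" using assms by auto
  ultimately show ?thesis using assms
    by (simp add: real_sqrt_mult field_simps)
qed

lemma Rstar_split:
  assumes "finite Sig" "e \<in> Sig"
  shows "Rstar \<epsilon> Sig ub th \<rho> (\<xi>(e := s)) =
     1/2 * (PsiStar \<epsilon> s * sqrt (ub (fst e) * ub (snd e)) * th (fst e) (snd e))
     + 1/2 * (\<Sum>(K,L)\<in>Sig - {e}. PsiStar \<epsilon> (\<xi> (K,L)) * sqrt (ub K * ub L) * th K L)"
proof -
  have "(\<Sum>(K,L)\<in>Sig. PsiStar \<epsilon> ((\<xi>(e := s)) (K,L)) * sqrt (ub K * ub L) * th K L)
     = (\<lambda>(K,L). PsiStar \<epsilon> ((\<xi>(e := s)) (K,L)) * sqrt (ub K * ub L) * th K L) e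
       + (\<Sum>(K,L)\<in>Sig - {e}. PsiStar \<epsilon> ((\<xi>(e := s)) (K,L)) * sqrt (ub K * ub L) * th K L)"
    using assms by (simp add: sum.remove)
  also have "(\<Sum>(K,L)\<in>Sig - {e}. PsiStar \<epsilon> ((\<xi>(e := s)) (K,L)) * sqrt (ub K * ub L) * th K L)
     = (\<Sum>(K,L)\<in>Sig - {e}. PsiStar \<epsilon> (\<xi> (K,L)) * sqrt (ub K * ub L) * th K L)"
    by (rule sum.cong) auto
  finally show ?thesis unfolding Rstar_def
    by (cases e) (simp add: distrib_left)
qed

lemma PsiStar_deriv:
  assumes "\<epsilon> > 0"
  shows "(PsiStar \<epsilon> has_real_derivative 2 * \<epsilon> * sinh (x / (2*\<epsilon>))) (at x)"
proof -
  have "((\<lambda>s. 4 * \<epsilon>\<^sup>2 * (cosh (s / (2 * \<epsilon>)) - 1)) has_real_derivative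
        4 * \<epsilon>\<^sup>2 * (sinh (x / (2 * \<epsilon>)) * (1 / (2*\<epsilon>)) - 0)) (at x)"
    using assms by (auto intro!: derivative_eq_intros)
  moreover have "4 * \<epsilon>\<^sup>2 * (sinh (x / (2 * \<epsilon>)) * (1 / (2*\<epsilon>)) - 0) = 2 * \<epsilon> * sinh (x / (2*\<epsilon>))"
    using assms by (simp add: power2_eq_square field_simps)
  ultimately show ?thesis unfolding PsiStar_def[abs_def] by simp
qed

lemma alg1:
  fixes Z E x s e t a b :: real
  assumes "Z > 0" "E > 0" "x > 0" "x \<noteq> 1"
  shows "e * (t / Z * (2 * s / ((x - 1) * E))) * (a * Z * E - b * Z * (x * E)) / 2
       = e * t * (s / (x - 1) * a - (- s) / (1 / x - 1) * b)"
proof -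
  define d where "d = x - 1"
  have n: "d \<noteq> 0" using assms by (auto simp: d_def)
  have x: "x = d + 1" by (simp add: d_def)
  have r: "(- s) / (1 / x - 1) = s * x / d" using assms n by (simp add: field_simps d_def)
  have l: "e * (t / Z * (2 * s / (d * E))) * (a * Z * E - b * Z * (x * E)) / 2 = e * t * s * (a - b * x) / d"
    using assms n by (simp add: field_simps)
  show ?thesis unfolding r d_def[symmetric] l using n by (simp add: divide_simps) (simp add: algebra_simps)
qed
lemma alg0:
  fixes Z E e t a b :: real
  assumes "Z > 0" "E > 0"
  shows "e * (t / Z * 2 * (1/E)) * (a * Z * E - b * Z * E) / 2 = e * t * (1 * a - 1 * b)"
  using assms by (simp add: field_simps)

lemma ue:
  fixes r v Z q e :: real
  assumes "v > 0" "Z > 0"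
  shows "r / (v * exp (- q / e) / Z) = r / v * Z * exp (q / e)"
proof -
  have "exp (- q / e) = 1 / exp (q / e)" by (simp add: exp_minus inverse_eq_divide)
  then show ?thesis using assms by simp
qed

theorem lemma3p6:
  fixes T :: "'c set" and Sig :: "('c \<times> 'c) set"
    and vol :: "'c \<Rightarrow> real" and tau :: "'c \<Rightarrow> 'c \<Rightarrow> real"
    and V :: "'c \<Rightarrow> real" and W :: "'c \<Rightarrow> 'c \<Rightarrow> real"
    and \<rho> :: "'c \<Rightarrow> real" and \<epsilon> :: real and K L :: 'c
  assumes "finite T"
    and "\<And>K. K \<in> T \<Longrightarrow> vol K > 0"
    and "Sig \<subseteq> T \<times> T"
    and "\<And>K L. (K, L) \<in> Sig \<Longrightarrow> K \<noteq> L"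
    and "\<And>K L. (K, L) \<in> Sig \<Longrightarrow> (L, K) \<in> Sig"
    and "\<And>K L. W K L = W L K"
    and "\<epsilon> > 0"
    and "\<And>K. K \<in> T \<Longrightarrow> \<rho> K > 0"
    and "(\<Sum>K\<in>T. \<rho> K) = 1"
    and "(K, L) \<in> Sig"
  shows "let ubar = (\<lambda>M. \<rho> M / piEq \<epsilon> T vol V W \<rho> M);
             th = theta \<epsilon> T vol tau V W \<rho>;
             \<xi> = (\<lambda>e. - dgrad (Eprime \<epsilon> T vol V W \<rho>) e)
         in ((\<lambda>s. Rstar \<epsilon> Sig ubar th \<rho> (\<xi>((K, L) := s)))
               has_real_derivative SGflux \<epsilon> T vol tau V W \<rho> K L) (at (\<xi> (K, L)))"
proof -
  define ubar where "ubar = (\<lambda>M. \<rho> M / piEq \<epsilon> T vol V W \<rho> M)"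
  define th where "th = theta \<epsilon> T vol tau V W \<rho>"
  define \<xi> where "\<xi> = (\<lambda>e. - dgrad (Eprime \<epsilon> T vol V W \<rho>) e)"
  have finS: "finite Sig" using assms(1,3) finite_subset by blast
  have KT: "K \<in> T" and LT: "L \<in> T" using assms(3,10) by auto
  define Z where "Z = Zpart \<epsilon> T vol V W \<rho>"
  define QK where "QK = Qpot T V W \<rho> K"
  define QL where "QL = Qpot T V W \<rho> L"
  have Zpos: "Z > 0" unfolding Z_def Zpart_def
    using assms(1,2) KT by (intro sum_pos) auto
  have piK: "piEq \<epsilon> T vol V W \<rho> K = vol K * exp (- QK / \<epsilon>) / Z"
    by (simp add: piEq_def QK_def Z_def)
  have piL: "piEq \<epsilon> T vol V W \<rho> L = vol L * exp (- QL / \<epsilon>) / Z"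
    by (simp add: piEq_def QL_def Z_def)
  have vK: "vol K > 0" and vL: "vol L > 0" and rK: "\<rho> K > 0" and rL: "\<rho> L > 0"
    using assms(2,8) KT LT by auto
  have ppK: "piEq \<epsilon> T vol V W \<rho> K > 0" using piK vK Zpos by simp
  have ppL: "piEq \<epsilon> T vol V W \<rho> L > 0" using piL vL Zpos by simp
  have uK: "ubar K > 0" and uL: "ubar L > 0" using ppK ppL rK rL by (auto simp: ubar_def)
  have xi: "\<xi> (K,L) = \<epsilon> * (ln (ubar K) - ln (ubar L))"
    using rK rL ppK ppL
    by (simp add: \<xi>_def dgrad_def Eprime_def ubar_def ln_div algebra_simps)
  have uKe: "ubar K = \<rho> K / vol K * Z * exp (QK / \<epsilon>)"
    unfolding ubar_def piK by (rule ue[OF vK Zpos])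
  have uLe: "ubar L = \<rho> L / vol L * Z * exp (QL / \<epsilon>)"
    unfolding ubar_def piL by (rule ue[OF vL Zpos])
  have deriv: "((\<lambda>s. Rstar \<epsilon> Sig ubar th \<rho> (\<xi>((K, L) := s))) has_real_derivative
      1/2 * (2 * \<epsilon> * sinh (\<xi> (K,L) / (2*\<epsilon>)) * sqrt (ubar K * ubar L) * th K L) + 0)
      (at (\<xi> (K, L)))"
    unfolding Rstar_split[OF finS assms(10)] fst_conv snd_conv
  proof (intro DERIV_add DERIV_const)
    have "(PsiStar \<epsilon> has_real_derivative 2 * \<epsilon> * sinh (\<xi> (K,L) / (2*\<epsilon>))) (at (\<xi> (K,L)))"
      by (rule PsiStar_deriv[OF assms(7)])
    then show "((\<lambda>z. 1 / 2 * (PsiStar \<epsilon> z * sqrt (ubar K * ubar L) * th K L)) has_real_derivative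
      1 / 2 * (2 * \<epsilon> * sinh (\<xi> (K, L) / (2 * \<epsilon>)) * sqrt (ubar K * ubar L) * th K L)) (at (\<xi> (K, L)))"
      by (intro DERIV_cmult DERIV_cmult_right)
  qed
  have key: "sinh (\<xi> (K,L) / (2*\<epsilon>)) * sqrt (ubar K * ubar L) = (ubar K - ubar L) / 2"
    using sqrt_sinh_ln[OF uK uL] xi assms(7) by (simp add: mult.commute)
  have val: "1/2 * (2 * \<epsilon> * sinh (\<xi> (K,L) / (2*\<epsilon>)) * sqrt (ubar K * ubar L) * th K L) + 0
     = \<epsilon> * th K L * (ubar K - ubar L) / 2"
  proof -
    have "1/2 * (2 * \<epsilon> * sinh (\<xi> (K,L) / (2*\<epsilon>)) * sqrt (ubar K * ubar L) * th K L) + 0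
      = \<epsilon> * th K L * (sinh (\<xi> (K,L) / (2*\<epsilon>)) * sqrt (ubar K * ubar L))" by simp
    also have "\<dots> = \<epsilon> * th K L * (ubar K - ubar L) / 2" by (simp only: key)
    finally show ?thesis .
  qed
  have goal: "\<epsilon> * th K L * (ubar K - ubar L) / 2 = SGflux \<epsilon> T vol tau V W \<rho> K L"
  proof (cases "QL - QK = 0")
    case True
    then have "QL = QK" by simp
    have th: "th K L = tau K L / Z * 2 * (1 / exp (QK / \<epsilon>))"
      using True by (simp add: th_def theta_def QK_def[symmetric] QL_def[symmetric]
          Z_def[symmetric] Let_def exp_minus inverse_eq_divide)
    have sg: "SGflux \<epsilon> T vol tau V W \<rho> K L = \<epsilon> * tau K L * (1 * (\<rho> K / vol K) - 1 * (\<rho> L / vol L))"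
      using True by (simp add: SGflux_def qdiff_def bern_def QK_def[symmetric] QL_def[symmetric] Let_def)
    show ?thesis unfolding sg th uKe uLe \<open>QL = QK\<close>
      by (rule alg0) (use Zpos in auto)
  next
    case False
    define s where "s = (QL - QK) / \<epsilon>"
    have s0: "s \<noteq> 0" using False assms(7) by (simp add: s_def)
    have qs: "QL / \<epsilon> = s + QK / \<epsilon>" using assms(7) by (simp add: s_def diff_divide_distrib)
    have eL: "exp (QL / \<epsilon>) = exp s * exp (QK / \<epsilon>)"
      unfolding qs by (rule exp_add)
    have es: "exp s - 1 \<noteq> 0" using s0 by simp
    have em: "exp (-s) = 1 / exp s" by (simp add: exp_minus inverse_eq_divide)
    have d: "exp (QL / \<epsilon>) - exp (QK / \<epsilon>) = (exp s - 1) * exp (QK / \<epsilon>)"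
      unfolding eL by (simp only: left_diff_distrib mult_1_left)
    have th0: "th K L = tau K L / Z * ((2 * (QL - QK) / \<epsilon>) / (exp (QL / \<epsilon>) - exp (QK / \<epsilon>)))"
      using False by (simp add: th_def theta_def QK_def[symmetric] QL_def[symmetric]
          Z_def[symmetric] Let_def)
    have s2: "2 * (QL - QK) / \<epsilon> = 2 * s" by (simp add: s_def)
    have th: "th K L = tau K L / Z * (2 * s / ((exp s - 1) * exp (QK / \<epsilon>)))"
      unfolding th0 d s2 ..
    have qd: "qdiff T V W \<rho> K L = QL - QK" by (simp add: qdiff_def QK_def QL_def)
    have sg0: "SGflux \<epsilon> T vol tau V W \<rho> K L =
       \<epsilon> * tau K L * (bern ((QL - QK) / \<epsilon>) * (\<rho> K / vol K) - bern (- (QL - QK) / \<epsilon>) * (\<rho> L / vol L))"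
      unfolding SGflux_def qd Let_def ..
    have m: "- (QL - QK) / \<epsilon> = - s" by (simp add: s_def diff_divide_distrib)
    have b1: "bern s = s / (exp s - 1)" using s0 by (simp add: bern_def)
    have b2: "bern (- s) = (- s) / (exp (- s) - 1)" using s0 by (simp add: bern_def)
    have sg: "SGflux \<epsilon> T vol tau V W \<rho> K L =
       \<epsilon> * tau K L * (s / (exp s - 1) * (\<rho> K / vol K) - (- s) / (exp (-s) - 1) * (\<rho> L / vol L))"
      unfolding sg0 m s_def[symmetric] b1 b2 ..
    have e1: "exp s \<noteq> 1" using es by simp
    show ?thesis unfolding sg th uKe uLe eL em
      by (rule alg1) (use Zpos e1 in auto)
  qed
  show ?thesis
    unfolding Let_def ubar_def[symmetric] th_def[symmetric] \<xi>_def[symmetric]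
    using deriv val goal by simp
qed

end
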